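(* For every integer $m\ge1$, the following identity holds in the field $\mathbb Q(q)(w,z_1,\dots,z_m)$ of rational functions (with $q$ an indeterminate): $$\sum_{\sigma\in S_m}\sum_{r=0}^{m}\begin{bmatrix} m\\ r\end{bmatrix}\prod_{k=1}^{r}\big(w-q^{m-1}z_{\sigma(k)}\big)\prod_{k=r+1}^{m}\big(z_{\sigma(k)}-q^{m-1}w\big)\prod_{1\le i<j\le m}\frac{z_{\sigma(i)}-q^{2}z_{\sigma(j)}}{z_{\sigma(i)}-z_{\sigma(j)}}=0.$$
   Context: $[k]=\frac{q^k-q^{-k}}{q-q^{-1}}$, $[k]!=[1][2]\cdots[k]$ with $[0]!=1$, and $\begin{bmatrix} m\\ r\end{bmatrix}=\frac{[m]!}{[r]![m-r]!}$ (a Laurent polynomial in $q$). $S_m$ is the symmetric group on $\{1,\dots,m\}$, acting by permuting the indices of $z_1,\dots,z_m$. *)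

theory Defs
  imports Complex_Main "HOL-Combinatorics.Permutations"
begin

definition qint :: "complex \<Rightarrow> nat \<Rightarrow> complex" where
  "qint q k = (q ^ k - inverse q ^ k) / (q - inverse q)"

definition qfact :: "complex \<Rightarrow> nat \<Rightarrow> complex" where
  "qfact q k = (\<Prod>i\<in>{1..k}. qint q i)"

definition qbinom :: "complex \<Rightarrow> nat \<Rightarrow> nat \<Rightarrow> complex" where
  "qbinom q m r = qfact q m / (qfact q r * qfact q (m - r))"

end

theory Submission
  imports Defs
begin


definition gint :: "complex \<Rightarrow> nat \<Rightarrow> complex" where
  "gint p k = (\<Sum>j<k. p ^ j)"
definition gfact :: "complex \<Rightarrow> nat \<Rightarrow> complex" where
  "gfact p n = (\<Prod>i\<in>{1..n}. gint p i)"

fun gb :: "complex \<Rightarrow> nat \<Rightarrow> nat \<Rightarrow> complex" where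
  "gb p 0 k = (if k = 0 then 1 else 0)"
| "gb p (Suc n) k = gb p n k + (if k = 0 then 0 else p ^ (Suc n - k) * gb p n (k - 1))"

lemma gb_zero: "k > n \<Longrightarrow> gb p n k = 0"
  by (induction n arbitrary: k) auto

lemma gb_0 [simp]: "gb p n 0 = 1"
  by (induction n) auto

lemma gint_split: "k \<le> n \<Longrightarrow> gint p (Suc n) = gint p (n - k) + p ^ (n - k) * gint p (Suc k)"
proof -
  assume "k \<le> n"
  then obtain d where n: "n = d + k" by (metis le_add_diff_inverse2)
  have "gint p (Suc (d + k)) = gint p d + p ^ d * gint p (Suc k)"
    unfolding gint_def
  proof (induction k)
    case 0 then show ?case by simp
  next
    case (Suc k) then show ?case by (simp add: algebra_simps power_add)
  qed
  then show ?thesis using n by simp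
qed

lemma gfact_0 [simp]: "gfact p 0 = 1"
  unfolding gfact_def by simp

lemma gfact_Suc: "gfact p (Suc n) = gfact p n * gint p (Suc n)"
  unfolding gfact_def by (simp add: atLeastAtMostSuc_conv mult.commute)

lemma gb_gfact: "k \<le> n \<Longrightarrow> gb p n k * gfact p k * gfact p (n - k) = gfact p n"
proof (induction n arbitrary: k)
  case 0 then show ?case by (simp add: gfact_def)
next
  case (Suc n)
  show ?case
  proof (cases k)
    case 0 then show ?thesis by (simp add: gfact_def)
  next
    case (Suc k')
    then have k': "k' \<le> n" using Suc.prems by simp
    show ?thesis
    proof (cases "k' = n")
      case True
      have "gb p n n * gfact p n = gfact p n" using Suc.IH[of n] by (simp add: gfact_def)
      then show ?thesis using True Suc \<open>k = Suc k'\<close> by (auto simp add: gb_zero gfact_Suc)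
    next
      case False
      then have lt: "k' < n" using k' by simp
      have e1: "gfact p (n - k') = gfact p (n - Suc k') * gint p (n - k')"
        using lt by (metis Suc_diff_Suc gfact_Suc)
      have i1: "gb p n (Suc k') * gfact p (Suc k') * gfact p (n - Suc k') = gfact p n"
        using Suc.IH[of "Suc k'"] lt by simp
      have i2: "gb p n k' * gfact p k' * gfact p (n - k') = gfact p n"
        using Suc.IH[of k'] k' by simp
      have "gb p (Suc n) k * gfact p k * gfact p (Suc n - k)
          = gb p n (Suc k') * gfact p (Suc k') * gfact p (n - k')
            + p ^ (n - k') * (gb p n k' * gfact p k' * gfact p (n - k')) * gint p (Suc k')"
        using \<open>k = Suc k'\<close> by (simp add: gfact_Suc algebra_simps)
      also have "\<dots> = gfact p n * gint p (n - k') + p ^ (n - k') * gfact p n * gint p (Suc k')"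
        using i1 i2 e1 by (simp add: algebra_simps)
      also have "\<dots> = gfact p (Suc n)"
        using gint_split[OF k', of p] by (simp add: gfact_Suc algebra_simps)
      finally show ?thesis .
    qed
  qed
qed

lemma T_identity:
  "(\<Sum>k\<le>n. gb p n k * (\<Prod>j<k. 1 - a * p ^ j) * (\<Prod>j<n - k. Y - p ^ j))
   = (\<Prod>j<n. Y - a * p ^ j)"
proof (induction n)
  case 0 then show ?case by simp
next
  case (Suc n)
  define A where "A k = (\<Prod>j<k. 1 - a * p ^ j)" for k
  define B where "B k = (\<Prod>j<k. Y - p ^ j)" for k
  have IH: "(\<Sum>k\<le>n. gb p n k * A k * B (n - k)) = (\<Prod>j<n. Y - a * p ^ j)"
    using Suc.IH by (simp add: A_def B_def)
  have "(\<Sum>k\<le>Suc n. gb p (Suc n) k * A k * B (Suc n - k))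
      = (\<Sum>k\<le>Suc n. gb p n k * A k * B (Suc n - k))
        + (\<Sum>k\<le>Suc n. (if k = 0 then 0 else p ^ (Suc n - k) * gb p n (k - 1)) * A k * B (Suc n - k))"
    by (simp add: sum.distrib algebra_simps)
  also have "(\<Sum>k\<le>Suc n. gb p n k * A k * B (Suc n - k))
      = (\<Sum>k\<le>n. gb p n k * A k * B (n - k) * (Y - p ^ (n - k)))"
    by (simp add: gb_zero B_def Suc_diff_le lessThan_Suc algebra_simps)
  also have "(\<Sum>k\<le>Suc n. (if k = 0 then 0 else p ^ (Suc n - k) * gb p n (k - 1)) * A k * B (Suc n - k))
      = (\<Sum>k\<le>n. p ^ (n - k) * gb p n k * A k * (1 - a * p ^ k) * B (n - k))"
    by (subst sum.atMost_Suc_shift) (simp add: A_def lessThan_Suc algebra_simps)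
  also have "(\<Sum>k\<le>n. gb p n k * A k * B (n - k) * (Y - p ^ (n - k)))
       + (\<Sum>k\<le>n. p ^ (n - k) * gb p n k * A k * (1 - a * p ^ k) * B (n - k))
     = (\<Sum>k\<le>n. gb p n k * A k * B (n - k) * (Y - a * p ^ n))"
  proof -
    have "\<And>k. k \<le> n \<Longrightarrow> gb p n k * A k * B (n - k) * (Y - p ^ (n - k))
       + p ^ (n - k) * gb p n k * A k * (1 - a * p ^ k) * B (n - k)
       = gb p n k * A k * B (n - k) * (Y - a * p ^ n)"
    proof -
      fix k assume "k \<le> n"
      then have "p ^ (n - k) * p ^ k = p ^ n" by (simp add: power_add[symmetric])
      then show "gb p n k * A k * B (n - k) * (Y - p ^ (n - k))
       + p ^ (n - k) * gb p n k * A k * (1 - a * p ^ k) * B (n - k)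
       = gb p n k * A k * B (n - k) * (Y - a * p ^ n)"
        by (simp add: algebra_simps)
    qed
    then show ?thesis by (simp add: sum.distrib[symmetric])
  qed
  also have "\<dots> = (\<Prod>j<Suc n. Y - a * p ^ j)"
    using IH by (simp add: sum_distrib_right[symmetric])
  finally show ?case by (simp add: A_def B_def)
qed

lemma qint_gint:
  assumes q: "q \<noteq> 0" and q2: "q ^ 2 \<noteq> 1"
  shows "q ^ (k - 1) * qint q k = gint (q ^ 2) k"
proof (cases k)
  case 0 then show ?thesis by (simp add: qint_def gint_def)
next
  case (Suc k')
  have d: "q - inverse q \<noteq> 0"
  proof
    assume "q - inverse q = 0"
    then have "q * q = 1" using q by (simp add: field_simps)
    then show False using q2 by (simp add: power2_eq_square)
  qed
  have g: "1 - (q^2) ^ k = (1 - q^2) * gint (q ^ 2) k"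
    unfolding gint_def by (rule one_diff_power_eq)
  have a1: "q ^ k' * q ^ Suc k' * q = (q^2) ^ k"
    using Suc by (simp add: power_add[symmetric] power_mult[symmetric] mult_2)
  have a2: "q ^ k' * inverse q ^ Suc k' * q = 1"
    using q by (simp add: power_inverse field_simps)
  have a3: "(q - inverse q) * q = q^2 - 1" using q by (simp add: field_simps power2_eq_square)
  have "q ^ k' * qint q k * ((q - inverse q) * q) = q ^ k' * (q ^ Suc k' - inverse q ^ Suc k') * q"
    unfolding qint_def using d Suc by simp
  also have "\<dots> = (q^2) ^ k - 1" using a1 a2 by (simp add: algebra_simps)
  also have "\<dots> = (q^2 - 1) * gint (q ^ 2) k" using g by (simp add: algebra_simps)
  finally have "q ^ k' * qint q k * (q^2 - 1) = (q^2 - 1) * gint (q ^ 2) k" using a3 by simp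
  then show ?thesis using q2 Suc by simp
qed

definition Eexp :: "nat \<Rightarrow> nat" where "Eexp n = (\<Sum>k\<in>{1..n}. k - 1)"

lemma Eexp_Suc: "Eexp (Suc n) = Eexp n + n"
  unfolding Eexp_def by (simp add: atLeastAtMostSuc_conv)

lemma Eexp_add: "Eexp (r + d) = Eexp r + Eexp d + r * d"
  by (induction d) (simp_all add: Eexp_Suc Eexp_def)

lemma qfact_gfact:
  assumes q: "q \<noteq> 0" and q2: "q ^ 2 \<noteq> 1"
  shows "q ^ Eexp n * qfact q n = gfact (q ^ 2) n"
  unfolding Eexp_def qfact_def gfact_def power_sum prod.distrib[symmetric]
  using qint_gint[OF q q2] by simp

lemma qfact_nz: "qfact q m \<noteq> 0 \<Longrightarrow> r \<le> m \<Longrightarrow> qfact q r \<noteq> 0"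
  unfolding qfact_def by auto

lemma qbinom_gb:
  assumes q: "q \<noteq> 0" and q2: "q ^ 2 \<noteq> 1" and nz: "qfact q m \<noteq> 0" and r: "r \<le> m"
  shows "qbinom q m r * q ^ (r * (m - r)) = gb (q ^ 2) m r"
proof -
  obtain d where m: "m = r + d" using r le_Suc_ex by blast
  have n1: "qfact q r \<noteq> 0" using qfact_nz[OF nz r] .
  have n2: "qfact q d \<noteq> 0" using qfact_nz[OF nz] m by simp
  have "gb (q^2) m r * gfact (q^2) r * gfact (q^2) d = gfact (q^2) m"
    using gb_gfact[OF r, of "q^2"] m by simp
  then have "gb (q^2) m r * (q ^ Eexp r * qfact q r) * (q ^ Eexp d * qfact q d)
      = q ^ Eexp r * q ^ Eexp d * q ^ (r * d) * qfact q m"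
    using qfact_gfact[OF q q2, of m] by (simp add: qfact_gfact[OF q q2] m Eexp_add power_add)
  then have "gb (q^2) m r * qfact q r * qfact q d = q ^ (r * d) * qfact q m"
    using q by (simp add: algebra_simps)
  then show ?thesis using n1 n2 m unfolding qbinom_def by (simp add: field_simps)
qed

definition alpha :: "complex \<Rightarrow> nat \<Rightarrow> nat \<Rightarrow> complex" where
  "alpha c r k = (if k \<le> r then 1 else - c)"
definition beta :: "complex \<Rightarrow> nat \<Rightarrow> nat \<Rightarrow> complex" where
  "beta c r k = (if k \<le> r then - c else 1)"

lemma split_prod:
  fixes m r :: nat
  assumes "r \<le> m"
  shows "(\<Prod>k\<in>{1..m}. f k) = (\<Prod>k\<in>{1..r}. f k) * (\<Prod>k\<in>{r+1..m}. f k)"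
proof -
  have "{1..m} = {1..r} \<union> {r+1..m}" using assms by (simp add: set_eq_iff) presburger
  then show ?thesis by (simp add: prod.union_disjoint[symmetric] ivl_disj_int)
qed

lemma L1:
  fixes c X t :: complex
  assumes "r \<le> m"
  shows "(\<Prod>k\<in>{1..m}. alpha c r k + X * (beta c r k * t ^ k))
       = (\<Prod>k\<in>{1..r}. 1 - c * t ^ k * X) * (\<Prod>k\<in>{r+1..m}. t ^ k * X - c)"
proof -
  have "(\<Prod>k\<in>{1..r}. alpha c r k + X * (beta c r k * t ^ k)) = (\<Prod>k\<in>{1..r}. 1 - c * t ^ k * X)"
    by (rule prod.cong) (auto simp: alpha_def beta_def algebra_simps)
  moreover have "(\<Prod>k\<in>{r+1..m}. alpha c r k + X * (beta c r k * t ^ k)) = (\<Prod>k\<in>{r+1..m}. t ^ k * X - c)"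
    by (rule prod.cong) (auto simp: alpha_def beta_def algebra_simps)
  ultimately show ?thesis using split_prod[OF assms] by metis
qed

lemma L2:
  fixes q X :: complex
  assumes "m \<ge> 1"
  shows "(\<Prod>k\<in>{1..r}. 1 - q ^ (m - 1) * (q^2) ^ k * X) = (\<Prod>j<r. 1 - q ^ (m + 1) * X * (q^2) ^ j)"
proof (induction r)
  case 0 then show ?case by simp
next
  case (Suc r)
  have "q ^ (m - 1) * (q^2) ^ Suc r = q ^ (m + 1) * (q^2) ^ r"
    using assms by (cases m) (simp_all add: power_add power_mult algebra_simps power2_eq_square)
  then have f: "q ^ (m - 1) * (q^2) ^ Suc r * X = q ^ (m + 1) * X * (q^2) ^ r"
    by (simp only: mult_ac)
  have "(\<Prod>k\<in>{1..Suc r}. 1 - q ^ (m - 1) * (q^2) ^ k * X)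
      = (\<Prod>k\<in>{1..r}. 1 - q ^ (m - 1) * (q^2) ^ k * X) * (1 - q ^ (m - 1) * (q^2) ^ Suc r * X)"
    by (simp add: atLeastAtMostSuc_conv mult.commute)
  then show ?case using Suc f by simp
qed

lemma sum2k: "(\<Sum>k\<in>{Suc r..r + d}. 2 * k) = d * (2 * r + d + 1)"
  by (induction d) (simp_all add: atLeastAtMostSuc_conv algebra_simps)

lemma L3:
  fixes q X :: complex
  assumes r: "r \<le> m" and q: "q \<noteq> 0"
  shows "(\<Prod>k\<in>{r+1..m}. (q^2) ^ k * X - q ^ (m - 1))
       = q ^ (r * (m - r)) * (\<Prod>j<m - r. q ^ (m + 1) * X - (q^2) ^ j)"
proof -
  obtain d where m: "m = r + d" using r le_Suc_ex by blast
  have "q ^ ((m + 1) * (m - r)) * (\<Prod>k\<in>{r+1..m}. (q^2) ^ k * X - q ^ (m - 1))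
      = (\<Prod>k\<in>{r+1..m}. q ^ (m + 1) * ((q^2) ^ k * X - q ^ (m - 1)))"
  proof -
    have "q ^ ((m + 1) * (m - r)) = (\<Prod>k\<in>{r+1..m}. q ^ (m + 1))"
      by (simp only: power_mult prod_constant card_atLeastAtMost) simp
    then show ?thesis by (simp add: prod.distrib)
  qed
  also have "\<dots> = (\<Prod>k\<in>{r+1..m}. q ^ (2 * k) * (q ^ (m + 1) * X - (q^2) ^ (m - k)))"
  proof (rule prod.cong)
    fix k assume k: "k \<in> {r+1..m}"
    have e1: "q ^ (m + 1) * q ^ (m - 1) = q ^ (2 * k) * (q^2) ^ (m - k)"
    proof -
      have ex: "(m + 1) + (m - 1) = 2 * k + 2 * (m - k)" using k by auto
      have "q ^ (m + 1) * q ^ (m - 1) = q ^ ((m + 1) + (m - 1))" by (simp only: power_add)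
      also have "\<dots> = q ^ (2 * k) * (q^2) ^ (m - k)" by (simp only: ex power_add power_mult)
      finally show ?thesis .
    qed
    have e2: "(q^2) ^ k = q ^ (2 * k)" by (simp add: power_mult)
    show "q ^ (m + 1) * ((q^2) ^ k * X - q ^ (m - 1)) = q ^ (2 * k) * (q ^ (m + 1) * X - (q^2) ^ (m - k))"
    proof -
      have "q ^ (m + 1) * ((q^2) ^ k * X - q ^ (m - 1)) = q ^ (m + 1) * (q^2) ^ k * X - q ^ (m + 1) * q ^ (m - 1)"
        by (simp add: algebra_simps)
      also have "\<dots> = q ^ (2 * k) * (q ^ (m + 1) * X) - q ^ (2 * k) * (q^2) ^ (m - k)"
        using e1 e2 by (simp add: mult_ac)
      also have "\<dots> = q ^ (2 * k) * (q ^ (m + 1) * X - (q^2) ^ (m - k))"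
        by (simp only: right_diff_distrib)
      finally show ?thesis .
    qed
  qed simp
  also have "\<dots> = q ^ (\<Sum>k\<in>{r+1..m}. 2 * k) * (\<Prod>k\<in>{r+1..m}. q ^ (m + 1) * X - (q^2) ^ (m - k))"
    by (simp add: prod.distrib power_sum)
  also have "(\<Prod>k\<in>{r+1..m}. q ^ (m + 1) * X - (q^2) ^ (m - k)) = (\<Prod>j<m - r. q ^ (m + 1) * X - (q^2) ^ j)"
    by (rule prod.reindex_bij_witness[where i="\<lambda>j. m - j" and j="\<lambda>k. m - k"]) auto
  also have "(\<Sum>k\<in>{r+1..m}. 2 * k) = (m + 1) * (m - r) + r * (m - r)"
    using sum2k[of r d] m by (simp add: algebra_simps)
  finally show ?thesis using q by (simp add: power_add)
qed

lemma h_zero: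
  assumes m: "m \<ge> 1" and q: "q \<noteq> 0" and q2: "q ^ 2 \<noteq> 1"
  shows "(\<Sum>r\<in>{0..m}. qbinom q m r * (\<Prod>k\<in>{1..m}. alpha (q ^ (m - 1)) r k + X * (beta (q ^ (m - 1)) r k * (q^2) ^ k))) = 0"
proof (cases "qfact q m = 0")
  case True then show ?thesis by (simp add: qbinom_def)
next
  case False
  define Y where "Y = q ^ (m + 1) * X"
  have "\<And>r. r \<in> {0..m} \<Longrightarrow> qbinom q m r * (\<Prod>k\<in>{1..m}. alpha (q ^ (m - 1)) r k + X * (beta (q ^ (m - 1)) r k * (q^2) ^ k))
     = gb (q^2) m r * (\<Prod>j<r. 1 - Y * (q^2) ^ j) * (\<Prod>j<m - r. Y - (q^2) ^ j)"
  proof -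
    fix r assume "r \<in> {0..m}"
    then have r: "r \<le> m" by simp
    show "qbinom q m r * (\<Prod>k\<in>{1..m}. alpha (q ^ (m - 1)) r k + X * (beta (q ^ (m - 1)) r k * (q^2) ^ k))
     = gb (q^2) m r * (\<Prod>j<r. 1 - Y * (q^2) ^ j) * (\<Prod>j<m - r. Y - (q^2) ^ j)"
      unfolding L1[OF r] L2[OF m] L3[OF r q] qbinom_gb[OF q q2 False r, symmetric] Y_def
      by (simp add: algebra_simps)
  qed
  then have "(\<Sum>r\<in>{0..m}. qbinom q m r * (\<Prod>k\<in>{1..m}. alpha (q ^ (m - 1)) r k + X * (beta (q ^ (m - 1)) r k * (q^2) ^ k)))
     = (\<Sum>r\<le>m. gb (q^2) m r * (\<Prod>j<r. 1 - Y * (q^2) ^ j) * (\<Prod>j<m - r. Y - (q^2) ^ j))"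
    by (simp add: atLeast0AtMost)
  also have "\<dots> = (\<Prod>j<m. Y - Y * (q^2) ^ j)" by (rule T_identity)
  also have "\<dots> = 0" using m by (intro prod_zero) (auto intro!: bexI[of _ 0])
  finally show ?thesis .
qed



definition pairs :: "nat \<Rightarrow> (nat \<times> nat) set" where
  "pairs m = {(i, j). 1 \<le> i \<and> i < j \<and> j \<le> m}"

definition gfun :: "complex \<Rightarrow> (nat \<Rightarrow> complex) \<Rightarrow> nat \<times> nat \<Rightarrow> complex" where
  "gfun t y p = (y (fst p) - t * y (snd p)) / (y (fst p) - y (snd p))"

definition Dfun :: "nat \<Rightarrow> complex \<Rightarrow> (nat \<Rightarrow> complex) \<Rightarrow> complex" where
  "Dfun m t y = (\<Prod>p\<in>pairs m. gfun t y p)"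

definition Lsym :: "nat \<Rightarrow> complex \<Rightarrow> (nat \<Rightarrow> complex) \<Rightarrow> ((nat \<Rightarrow> complex) \<Rightarrow> complex) \<Rightarrow> complex" where
  "Lsym m t z f = (\<Sum>\<sigma>\<in>{\<sigma>. \<sigma> permutes {1..m}}. f (z \<circ> \<sigma>) * Dfun m t (z \<circ> \<sigma>))"

lemma finite_pairs: "finite (pairs m)"
proof -
  have "pairs m \<subseteq> {1..m} \<times> {1..m}" unfolding pairs_def by auto
  then show ?thesis by (rule finite_subset) auto
qed

lemma Rswap:
  assumes i: "1 \<le> i" "Suc i \<le> m"
  shows "(\<Prod>p\<in>pairs m - {(i, Suc i)}. gfun t (y \<circ> transpose i (Suc i)) p)
       = (\<Prod>p\<in>pairs m - {(i, Suc i)}. gfun t y p)"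
proof -
  let ?\<tau> = "transpose i (Suc i)"
  let ?h = "\<lambda>p. (?\<tau> (fst p), ?\<tau> (snd p))"
  show ?thesis
  proof (rule prod.reindex_bij_witness[where i = ?h and j = ?h])
    fix p assume "p \<in> pairs m - {(i, Suc i)}"
    then show "?h (?h p) = p" by (cases p) (auto simp: transpose_def pairs_def)
  next
    fix p assume "p \<in> pairs m - {(i, Suc i)}"
    then show "?h p \<in> pairs m - {(i, Suc i)}"
      using i by (cases p) (auto simp: pairs_def transpose_def split: if_splits)
  next
    fix p assume "p \<in> pairs m - {(i, Suc i)}"
    then show "?h (?h p) = p" by (cases p) (auto simp: transpose_def pairs_def)
  next
    fix p assume "p \<in> pairs m - {(i, Suc i)}"
    then show "?h p \<in> pairs m - {(i, Suc i)}"
      using i by (cases p) (auto simp: pairs_def transpose_def split: if_splits)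
  next
    fix p assume "p \<in> pairs m - {(i, Suc i)}"
    show "gfun t y (?h p) = gfun t (y \<circ> ?\<tau>) p" by (simp add: gfun_def)
  qed
qed

lemma pair_cancel:
  assumes i: "1 \<le> i" "Suc i \<le> m"
  shows "(y (Suc i) - t * y i) * Dfun m t y
       + (y i - t * y (Suc i)) * Dfun m t (y \<circ> transpose i (Suc i)) = 0"
proof -
  let ?\<tau> = "transpose i (Suc i)"
  let ?R = "\<Prod>p\<in>pairs m - {(i, Suc i)}. gfun t y p"
  have mem: "(i, Suc i) \<in> pairs m" using i by (simp add: pairs_def)
  have D1: "Dfun m t y = gfun t y (i, Suc i) * ?R"
    unfolding Dfun_def by (rule prod.remove[OF finite_pairs mem])
  have D2: "Dfun m t (y \<circ> ?\<tau>) = gfun t (y \<circ> ?\<tau>) (i, Suc i) * ?R"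
    unfolding Dfun_def prod.remove[OF finite_pairs mem] Rswap[OF i] ..
  have g2: "gfun t (y \<circ> ?\<tau>) (i, Suc i) = (y (Suc i) - t * y i) / (y (Suc i) - y i)"
    by (simp add: gfun_def)
  have g1: "gfun t y (i, Suc i) = (y i - t * y (Suc i)) / (y i - y (Suc i))"
    by (simp add: gfun_def)
  have neg: "y (Suc i) - y i = - (y i - y (Suc i))" by simp
  show ?thesis unfolding D1 D2 g1 g2 neg divide_minus_right
    by (simp add: algebra_simps)
qed

lemma Kswap:
  assumes i: "1 \<le> i" "i < m"
    and G: "\<And>y. G (y \<circ> transpose i (Suc i)) = G y"
  shows "Lsym m t z (\<lambda>y. G y * y (Suc i)) = t * Lsym m t z (\<lambda>y. G y * y i)"
proof -
  let ?\<tau> = "transpose i (Suc i)"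
  let ?P = "{\<sigma>. \<sigma> permutes {1..m}}"
  define E where "E \<sigma> = G (z \<circ> \<sigma>) * (((z \<circ> \<sigma>) (Suc i) - t * (z \<circ> \<sigma>) i) * Dfun m t (z \<circ> \<sigma>))" for \<sigma>
  have tp: "?\<tau> permutes {1..m}" using i by (intro permutes_swap_id) auto
  have diff: "Lsym m t z (\<lambda>y. G y * y (Suc i)) - t * Lsym m t z (\<lambda>y. G y * y i) = sum E ?P"
    unfolding Lsym_def E_def sum_distrib_left sum_subtractf[symmetric]
    by (rule sum.cong) (simp_all add: algebra_simps)
  have sw: "sum E ?P = sum (\<lambda>\<sigma>. E (\<sigma> \<circ> ?\<tau>)) ?P"
    by (rule sum_permutations_compose_right[OF tp])
  have pc: "E \<sigma> + E (\<sigma> \<circ> ?\<tau>) = 0" for \<sigma>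
  proof -
    let ?y = "z \<circ> \<sigma>"
    have y1: "z \<circ> (\<sigma> \<circ> ?\<tau>) = ?y \<circ> ?\<tau>" by (simp add: comp_assoc)
    have "E (\<sigma> \<circ> ?\<tau>) = G ?y * ((?y i - t * ?y (Suc i)) * Dfun m t (?y \<circ> ?\<tau>))"
      unfolding E_def y1 G by simp
    then have "E \<sigma> + E (\<sigma> \<circ> ?\<tau>) = G ?y * ((?y (Suc i) - t * ?y i) * Dfun m t ?y
       + (?y i - t * ?y (Suc i)) * Dfun m t (?y \<circ> ?\<tau>))"
      unfolding E_def by (simp add: algebra_simps)
    also have "\<dots> = 0" using pair_cancel[of i m ?y t] i by simp
    finally show ?thesis .
  qed
  have "2 * sum E ?P = sum E ?P + sum (\<lambda>\<sigma>. E (\<sigma> \<circ> ?\<tau>)) ?P" using sw by simp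
  also have "\<dots> = 0" unfolding sum.distrib[symmetric] pc by simp
  finally have "sum E ?P = 0" by simp
  then show ?thesis using diff by simp
qed

definition fS :: "nat set \<Rightarrow> (nat \<Rightarrow> complex) \<Rightarrow> complex" where
  "fS S y = (\<Prod>k\<in>S. y k)"

lemma Lsym_cong: "(\<And>y. f y = g y) \<Longrightarrow> Lsym m t z f = Lsym m t z g"
  by (simp add: Lsym_def)

lemma exists_gap:
  assumes S: "S \<subseteq> {1..m}" and ne: "S \<noteq> {1..card S}"
  shows "\<exists>i. 1 \<le> i \<and> i \<notin> S \<and> Suc i \<in> S"
proof -
  have fin: "finite S" using S finite_subset by blast
  obtain k where k: "k \<in> {1..card S}" "k \<notin> S"
  proof (rule ccontr)
    assume "\<not> thesis"
    then have "{1..card S} \<subseteq> S" using that by blast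
    then have "{1..card S} = S" using fin by (intro card_subset_eq) auto
    then show False using ne by simp
  qed
  have "\<exists>x\<in>S. x > k"
  proof (rule ccontr)
    assume nx: "\<not> (\<exists>x\<in>S. x > k)"
    have "x \<in> {1..k - 1}" if "x \<in> S" for x
    proof -
      have a: "1 \<le> x" using that S by auto
      have "\<not> k < x" using that nx by blast
      then have "x < k" using that k(2) by (cases "x = k") auto
      then show ?thesis using a by simp
    qed
    then have "S \<subseteq> {1..k - 1}" by blast
    then have "card S \<le> k - 1" by (metis card_atLeastAtMost card_mono finite_atLeastAtMost diff_Suc_1)
    moreover have "k \<le> card S" "1 \<le> k" using k by auto
    ultimately show False by linarith
  qed
  define T where "T = {x\<in>S. x > k}"
  have T: "finite T" "T \<noteq> {}" using fin \<open>\<exists>x\<in>S. x > k\<close> by (auto simp: T_def)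
  define x0 where "x0 = Min T"
  have x0: "x0 \<in> S" "x0 > k" using Min_in[OF T] by (auto simp: x0_def T_def)
  have "x0 - 1 \<notin> S"
  proof
    assume a: "x0 - 1 \<in> S"
    show False
    proof (cases "x0 - 1 = k")
      case True then show False using a k by simp
    next
      case False
      then have "x0 - 1 \<in> T" using a x0 by (auto simp: T_def)
      then have "x0 \<le> x0 - 1" using Min_le[OF T(1)] x0_def by blast
      then show False using x0 by simp
    qed
  qed
  moreover have "1 \<le> x0 - 1" using x0 k by (simp; linarith)
  moreover have "Suc (x0 - 1) = x0" using x0 by simp
  ultimately show ?thesis using x0 by metis
qed

lemma move:
  assumes S: "S \<subseteq> {1..m}"
  shows "t ^ (\<Sum>{1..card S}) * Lsym m t z (fS S) = t ^ (\<Sum>S) * Lsym m t z (fS {1..card S})"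
  using S
proof (induction "\<Sum>S" arbitrary: S rule: less_induct)
  case less
  show ?case
  proof (cases "S = {1..card S}")
    case True
    have a: "fS S = fS {1..card S}" using True by (rule arg_cong)
    have b: "\<Sum>S = \<Sum>{1..card S}" using True by (rule arg_cong)
    show ?thesis unfolding a b ..
  next
    case False
    obtain i where i: "1 \<le> i" "i \<notin> S" "Suc i \<in> S" using exists_gap[OF less.prems False] by blast
    have fin: "finite S" using less.prems finite_subset by blast
    have im: "i < m" using i less.prems by auto
    define S0 where "S0 = S - {Suc i}"
    define S' where "S' = insert i S0"
    have i0: "i \<notin> S0" using i by (simp add: S0_def)
    have fin0: "finite S0" using fin by (simp add: S0_def)
    have cpos: "card S > 0" using fin i(3) card_gt_0_iff by blast
    have cS': "card S' = card S"
      using i fin cpos by (simp add: S'_def S0_def card_insert_if card_Diff_singleton)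
    have sS: "\<Sum>S = Suc i + \<Sum>S0" using i fin by (simp add: S0_def sum.remove)
    have sS': "\<Sum>S' = i + \<Sum>S0" using i0 fin0 by (simp add: S'_def)
    have S'sub: "S' \<subseteq> {1..m}" using less.prems i im by (auto simp: S'_def S0_def)
    have IH: "t ^ (\<Sum>{1..card S'}) * Lsym m t z (fS S') = t ^ (\<Sum>S') * Lsym m t z (fS {1..card S'})"
      using less.hyps[of S'] sS sS' S'sub by simp
    have G: "fS S0 (y \<circ> transpose i (Suc i)) = fS S0 y" for y
      unfolding fS_def using i0 by (intro prod.cong) (auto simp: transpose_def S0_def)
    have e1: "fS S y = fS S0 y * y (Suc i)" for y
      unfolding fS_def S0_def using fin i by (simp add: prod.remove mult.commute)
    have e2: "fS S' y = fS S0 y * y i" for y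
      unfolding fS_def S'_def using fin0 i0 by (simp add: mult.commute)
    have K: "Lsym m t z (fS S) = t * Lsym m t z (fS S')"
    proof -
      have "Lsym m t z (fS S) = Lsym m t z (\<lambda>y. fS S0 y * y (Suc i))" by (rule Lsym_cong) (rule e1)
      also have "\<dots> = t * Lsym m t z (\<lambda>y. fS S0 y * y i)" by (rule Kswap[OF i(1) im]) (rule G)
      also have "Lsym m t z (\<lambda>y. fS S0 y * y i) = Lsym m t z (fS S')" by (rule Lsym_cong) (rule e2[symmetric])
      finally show ?thesis .
    qed
    have "t ^ (\<Sum>{1..card S}) * Lsym m t z (fS S) = t * (t ^ (\<Sum>{1..card S'}) * Lsym m t z (fS S'))"
      unfolding K cS' by (simp only: mult_ac)
    also have "\<dots> = t * (t ^ (\<Sum>S') * Lsym m t z (fS {1..card S'}))" unfolding IH ..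
    also have "\<dots> = t ^ (\<Sum>S) * Lsym m t z (fS {1..card S})" unfolding sS sS' cS' by (simp add: power_add)
    finally show ?thesis .
  qed
qed



lemma Lsym_sum: "Lsym m t z (\<lambda>y. \<Sum>x\<in>A. F x y) = (\<Sum>x\<in>A. Lsym m t z (F x))"
  unfolding Lsym_def sum_distrib_right by (rule sum.swap)

lemma Lsym_mult: "Lsym m t z (\<lambda>y. a * F y) = a * Lsym m t z F"
  unfolding Lsym_def sum_distrib_left by (simp add: mult_ac)

definition Cst :: "complex \<Rightarrow> complex \<Rightarrow> nat \<Rightarrow> nat \<Rightarrow> nat set \<Rightarrow> complex" where
  "Cst c w m r S = (\<Prod>k\<in>S. beta c r k) * (\<Prod>k\<in>{1..m} - S. alpha c r k) * w ^ card ({1..m} - S)"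

lemma expand:
  assumes r: "r \<le> m"
  shows "(\<Prod>k\<in>{1..r}. w - c * y k) * (\<Prod>k\<in>{r+1..m}. y k - c * w)
       = (\<Sum>S\<in>Pow {1..m}. Cst c w m r S * fS S y)"
proof -
  have a: "(\<Prod>k\<in>{1..r}. w - c * y k) = (\<Prod>k\<in>{1..r}. beta c r k * y k + alpha c r k * w)"
    by (rule prod.cong) (auto simp: alpha_def beta_def)
  have b: "(\<Prod>k\<in>{r+1..m}. y k - c * w) = (\<Prod>k\<in>{r+1..m}. beta c r k * y k + alpha c r k * w)"
    by (rule prod.cong) (auto simp: alpha_def beta_def)
  have "(\<Prod>k\<in>{1..r}. w - c * y k) * (\<Prod>k\<in>{r+1..m}. y k - c * w)
      = (\<Prod>k\<in>{1..m}. beta c r k * y k + alpha c r k * w)"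
    unfolding a b split_prod[OF r] ..
  also have "\<dots> = (\<Sum>S\<in>Pow {1..m}. (\<Prod>k\<in>S. beta c r k * y k) * (\<Prod>k\<in>{1..m} - S. alpha c r k * w))"
    by (rule prod_add) simp
  also have "\<dots> = (\<Sum>S\<in>Pow {1..m}. Cst c w m r S * fS S y)"
    by (rule sum.cong) (simp_all add: Cst_def fS_def prod.distrib mult_ac)
  finally show ?thesis .
qed

lemma group_card:
  fixes cf :: "nat \<Rightarrow> complex" and Q :: "nat \<Rightarrow> nat set \<Rightarrow> complex" and \<nu> :: "nat \<Rightarrow> complex"
  assumes A: "finite A"
  shows "(\<Sum>r\<in>R. cf r * (\<Sum>S\<in>Pow A. Q r S * \<nu> (card S)))
       = (\<Sum>s\<le>card A. \<nu> s * (\<Sum>r\<in>R. cf r * (\<Sum>S\<in>{S\<in>Pow A. card S = s}. Q r S)))"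
proof -
  have g: "(\<Sum>S\<in>Pow A. Q r S * \<nu> (card S)) = (\<Sum>s\<le>card A. \<nu> s * (\<Sum>S\<in>{S\<in>Pow A. card S = s}. Q r S))" for r
  proof -
    have "(\<Sum>S\<in>Pow A. Q r S * \<nu> (card S)) = (\<Sum>s\<le>card A. (\<Sum>S\<in>{S. S \<in> Pow A \<and> card S = s}. Q r S * \<nu> (card S)))"
      by (rule sum.group[symmetric]) (use A in \<open>auto intro: card_mono\<close>)
    also have "\<dots> = (\<Sum>s\<le>card A. \<nu> s * (\<Sum>S\<in>{S\<in>Pow A. card S = s}. Q r S))"
    proof (rule sum.cong[OF refl])
      fix s assume "s \<in> {..card A}"
      have "(\<Sum>S\<in>{S. S \<in> Pow A \<and> card S = s}. Q r S * \<nu> (card S)) = (\<Sum>S\<in>{S. S \<in> Pow A \<and> card S = s}. Q r S * \<nu> s)"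
        by (rule sum.cong) auto
      also have "\<dots> = \<nu> s * (\<Sum>S\<in>{S\<in>Pow A. card S = s}. Q r S)"
        by (metis (no_types) mult.commute sum_distrib_right)
      finally show "(\<Sum>S\<in>{S. S \<in> Pow A \<and> card S = s}. Q r S * \<nu> (card S)) = \<nu> s * (\<Sum>S\<in>{S\<in>Pow A. card S = s}. Q r S)" .
    qed
    finally show ?thesis .
  qed
  show ?thesis unfolding g sum_distrib_left
    by (subst sum.swap) (simp add: mult_ac)
qed

lemma coeffs_zero:
  assumes m: "m \<ge> 1" and q: "q \<noteq> 0" and q2: "q ^ 2 \<noteq> 1" and s: "s \<le> m"
  shows "(\<Sum>r\<in>{0..m}. qbinom q m r * (\<Sum>S\<in>{S\<in>Pow {1..m}. card S = s}.
            (\<Prod>k\<in>S. beta (q ^ (m - 1)) r k * (q^2) ^ k) * (\<Prod>k\<in>{1..m} - S. alpha (q ^ (m - 1)) r k))) = 0"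
proof -
  define Q where "Q r S = (\<Prod>k\<in>S. beta (q ^ (m - 1)) r k * (q^2) ^ k) * (\<Prod>k\<in>{1..m} - S. alpha (q ^ (m - 1)) r k)" for r S
  define e where "e s = (\<Sum>r\<in>{0..m}. qbinom q m r * (\<Sum>S\<in>{S\<in>Pow {1..m}. card S = s}. Q r S))" for s
  have "(\<Sum>i\<le>m. e i * X ^ i) = 0" for X
  proof -
    have p: "(\<Prod>k\<in>{1..m}. alpha (q ^ (m - 1)) r k + X * (beta (q ^ (m - 1)) r k * (q^2) ^ k))
        = (\<Sum>S\<in>Pow {1..m}. Q r S * X ^ card S)" for r
    proof -
      have "(\<Prod>k\<in>{1..m}. alpha (q ^ (m - 1)) r k + X * (beta (q ^ (m - 1)) r k * (q^2) ^ k))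
          = (\<Prod>k\<in>{1..m}. X * (beta (q ^ (m - 1)) r k * (q^2) ^ k) + alpha (q ^ (m - 1)) r k)"
        by (simp add: add.commute)
      also have "\<dots> = (\<Sum>S\<in>Pow {1..m}. (\<Prod>k\<in>S. X * (beta (q ^ (m - 1)) r k * (q^2) ^ k)) * (\<Prod>k\<in>{1..m} - S. alpha (q ^ (m - 1)) r k))"
        by (rule prod_add) simp
      also have "\<dots> = (\<Sum>S\<in>Pow {1..m}. Q r S * X ^ card S)"
        by (rule sum.cong) (simp_all add: Q_def prod.distrib mult_ac)
      finally show ?thesis .
    qed
    have "0 = (\<Sum>r\<in>{0..m}. qbinom q m r * (\<Sum>S\<in>Pow {1..m}. Q r S * X ^ card S))"
      using h_zero[OF m q q2, of X] unfolding p by simp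
    also have "\<dots> = (\<Sum>i\<le>card {1..m}. X ^ i * e i)"
      unfolding e_def by (rule group_card) simp
    finally show ?thesis by (simp add: mult.commute)
  qed
  then have "\<forall>i\<le>m. e i = 0" using polyfun_eq_0 by blast
  then show ?thesis using s by (simp add: e_def Q_def)
qed

theorem mainTheorem8:
  fixes m :: nat and q w :: complex and z :: "nat \<Rightarrow> complex"
  assumes "m \<ge> 1"
    and "q \<noteq> 0" and "q ^ 2 \<noteq> 1"
    and "inj_on z {1..m}"
  shows "(\<Sum>\<sigma>\<in>{\<sigma>. \<sigma> permutes {1..m}}. \<Sum>r=0..m.
            qbinom q m r
          * (\<Prod>k\<in>{1..r}. (w - q ^ (m - 1) * z (\<sigma> k)))
          * (\<Prod>k\<in>{r+1..m}. (z (\<sigma> k) - q ^ (m - 1) * w))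
          * (\<Prod>(i, j)\<in>{(i, j). 1 \<le> i \<and> i < j \<and> j \<le> m}.
               (z (\<sigma> i) - q ^ 2 * z (\<sigma> j)) / (z (\<sigma> i) - z (\<sigma> j)))) = 0"
proof -
  note m = assms(1) and q = assms(2) and q2 = assms(3)
  define c where "c = q ^ (m - 1)"
  define t where "t = q ^ 2"
  define A where "A = {1..m}"
  have t0: "t \<noteq> 0" using q by (simp add: t_def)
  define \<Phi> where "\<Phi> y = (\<Sum>r\<in>{0..m}. qbinom q m r * ((\<Prod>k\<in>{1..r}. w - c * y k) * (\<Prod>k\<in>{r+1..m}. y k - c * w)))" for y
  define Q where "Q r S = (\<Prod>k\<in>S. beta c r k * t ^ k) * (\<Prod>k\<in>A - S. alpha c r k)" for r S
  define lam where "lam s = Lsym m t z (fS {1..s})" for s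
  define \<nu> where "\<nu> s = w ^ (m - s) * lam s / t ^ (\<Sum>{1..s})" for s
  have D: "Dfun m t (z \<circ> \<sigma>) = (\<Prod>(i, j)\<in>{(i, j). 1 \<le> i \<and> i < j \<and> j \<le> m}.
               (z (\<sigma> i) - q ^ 2 * z (\<sigma> j)) / (z (\<sigma> i) - z (\<sigma> j)))" for \<sigma>
    unfolding Dfun_def pairs_def gfun_def t_def by (rule prod.cong) auto
  have step1: "?thesis \<longleftrightarrow> Lsym m t z \<Phi> = 0"
    unfolding Lsym_def \<Phi>_def D c_def sum_distrib_right by (simp add: mult_ac)
  have step2: "Lsym m t z \<Phi> = (\<Sum>r\<in>{0..m}. qbinom q m r * (\<Sum>S\<in>Pow A. Cst c w m r S * Lsym m t z (fS S)))"
  proof -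
    have "Lsym m t z \<Phi> = Lsym m t z (\<lambda>y. \<Sum>r\<in>{0..m}. qbinom q m r * (\<Sum>S\<in>Pow A. Cst c w m r S * fS S y))"
      unfolding \<Phi>_def A_def
    proof (rule Lsym_cong, rule sum.cong[OF refl])
      fix y r assume "r \<in> {0..m}"
      then have r: "r \<le> m" by simp
      show "qbinom q m r * ((\<Prod>k\<in>{1..r}. w - c * y k) * (\<Prod>k\<in>{r+1..m}. y k - c * w))
          = qbinom q m r * (\<Sum>S\<in>Pow {1..m}. Cst c w m r S * fS S y)"
        unfolding expand[OF r] ..
    qed
    also have "\<dots> = (\<Sum>r\<in>{0..m}. qbinom q m r * (\<Sum>S\<in>Pow A. Cst c w m r S * Lsym m t z (fS S)))"
      by (simp add: Lsym_sum Lsym_mult)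
    finally show ?thesis .
  qed
  have step3: "Cst c w m r S * Lsym m t z (fS S) = Q r S * \<nu> (card S)" if S: "S \<in> Pow A" for r S
  proof -
    have SA: "S \<subseteq> {1..m}" using S by (simp add: A_def)
    have fin: "finite S" using SA finite_subset by blast
    have L: "Lsym m t z (fS S) = t ^ (\<Sum>S) * lam (card S) / t ^ (\<Sum>{1..card S})"
      using move[OF SA, of t z] t0 unfolding lam_def by (simp add: field_simps)
    have cd: "card (A - S) = m - card S" using SA fin by (simp add: A_def card_Diff_subset)
    have ps: "t ^ (\<Sum>S) = (\<Prod>k\<in>S. t ^ k)" by (simp add: power_sum)
    show ?thesis unfolding L Cst_def Q_def \<nu>_def cd ps A_def[symmetric]
      by (simp add: prod.distrib mult_ac)
  qed
  have "Lsym m t z \<Phi> = (\<Sum>r\<in>{0..m}. qbinom q m r * (\<Sum>S\<in>Pow A. Q r S * \<nu> (card S)))"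
    unfolding step2 by (intro sum.cong refl arg_cong[where f="\<lambda>x. _ * x"]) (simp add: step3)
  also have "\<dots> = (\<Sum>s\<le>card A. \<nu> s * (\<Sum>r\<in>{0..m}. qbinom q m r * (\<Sum>S\<in>{S\<in>Pow A. card S = s}. Q r S)))"
    by (rule group_card) (simp add: A_def)
  also have "\<dots> = 0"
  proof (rule sum.neutral, rule ballI)
    fix s assume "s \<in> {..card A}"
    then have s: "s \<le> m" by (simp add: A_def)
    show "\<nu> s * (\<Sum>r\<in>{0..m}. qbinom q m r * (\<Sum>S\<in>{S\<in>Pow A. card S = s}. Q r S)) = 0"
      using coeffs_zero[OF m q q2 s] unfolding Q_def A_def c_def t_def by simp
  qed
  finally show ?thesis using step1 by simp
qed

end
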